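(* Let $\mathcal W'_r=\{W\in\mathcal W_r: W=\widehat W\}$ be the collection of primary wiretap sets. Then $\min_{W\in\mathcal W_r}\Omega(W)=\min_{W\in\mathcal W'_r}\Omega(W)$.
   Context: $\mathcal G=(\mathcal V,\mathcal E)$ is a finite directed acyclic graph (multiple edges allowed); $S$ is the set of source nodes (exactly the nodes without input edges), $\rho\notin S$ the sink (no output edges), and every node other than $\rho$ has a directed path to $\rho$. For a node $\sigma$ and edge $e$, $\sigma\to e$ means there is a directed path from $\sigma$ whose last edge is $e$. For $C\subseteq\mathcal E$: $D_C=\{\sigma\in S:\exists e\in C,\ \sigma\to e\}$, $I_C=\{\sigma\in S:$ no path from $\sigma$ to $\rho$ after deleting $C\}$; $\Lambda(\mathcal N)=\{C\subseteq\mathcal E:I_C\neq\emptyset\}$. $\mathcal W_r=\{W\subseteq\mathcal E:|W|\le r\}$ for a nonnegative integer $r$. For $W\subseteq\mathcal E$, $\Omega(W)=\min\{|C|-|W|: C\in\Lambda(\mathcal N),\ W\subseteq C,\ D_W\subseteq I_C\}$. Cuts separating edge sets: for a node set $U$ and edge set $W$, subdivide each $e\in W$ by a new node $v_e$ splitting $e$ into $e^1$ (from $\mathrm{tail}(e)$ to $v_e$) and $e^2$ (from $v_e$ to $\mathrm{head}(e)$); a cut separating $W$ from $U$ is an edge set obtained from an edge set of the subdivided graph whose deletion leaves no path from $U$ to any $v_e$, after replacing each $e^1$ or $e^2$ by $e$. A minimum cut is one of minimum size. A minimum cut separating $W$ from $U$ is primary if it separates from $U$ every minimum cut separating $W$ from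 $U$; it exists and is unique. $\widehat W$ denotes the primary minimum cut separating $W$ from $D_W$; $W$ is called primary if $W=\widehat W$. *)

theory Defs
  imports Main
begin

text \<open>A finite directed multigraph: node set V, edge set E (edges of an abstract
type 'e, allowing parallel edges), with tail and head maps tail, head.\<close>

definition arcs :: "('e \<Rightarrow> 'v) \<Rightarrow> ('e \<Rightarrow> 'v) \<Rightarrow> 'e set \<Rightarrow> ('v \<times> 'v) set" where
  "arcs tail head F = {(tail e, head e) | e. e \<in> F}"

definition reach :: "('e \<Rightarrow> 'v) \<Rightarrow> ('e \<Rightarrow> 'v) \<Rightarrow> 'e set \<Rightarrow> 'v \<Rightarrow> 'v \<Rightarrow> bool" where
  "reach tail head F u v \<longleftrightarrow> (u, v) \<in> (arcs tail head F)\<^sup>*"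

definition sources :: "'v set \<Rightarrow> 'e set \<Rightarrow> ('e \<Rightarrow> 'v) \<Rightarrow> ('e \<Rightarrow> 'v) \<Rightarrow> 'v set" where
  "sources V E tail head = {v \<in> V. \<not> (\<exists>e\<in>E. head e = v)}"

definition network :: "'v set \<Rightarrow> 'e set \<Rightarrow> ('e \<Rightarrow> 'v) \<Rightarrow> ('e \<Rightarrow> 'v) \<Rightarrow> 'v \<Rightarrow> bool" where
  "network V E tail head \<rho> \<longleftrightarrow>
     finite V \<and> finite E \<and> (\<forall>e\<in>E. tail e \<in> V \<and> head e \<in> V) \<and>
     acyclic (arcs tail head E) \<and>
     \<rho> \<in> V \<and> \<rho> \<notin> sources V E tail head \<and> (\<forall>e\<in>E. tail e \<noteq> \<rho>) \<and>
     (\<forall>v\<in>V. v \<noteq> \<rho> \<longrightarrow> reach tail head E v \<rho>)"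

definition to_edge :: "'e set \<Rightarrow> ('e \<Rightarrow> 'v) \<Rightarrow> ('e \<Rightarrow> 'v) \<Rightarrow> 'v \<Rightarrow> 'e \<Rightarrow> bool" where
  "to_edge E tail head \<sigma> e \<longleftrightarrow> e \<in> E \<and> reach tail head E \<sigma> (tail e)"

definition D_set :: "'v set \<Rightarrow> 'e set \<Rightarrow> ('e \<Rightarrow> 'v) \<Rightarrow> ('e \<Rightarrow> 'v) \<Rightarrow> 'e set \<Rightarrow> 'v set" where
  "D_set V E tail head C = {\<sigma> \<in> sources V E tail head. \<exists>e\<in>C. to_edge E tail head \<sigma> e}"

definition I_set :: "'v set \<Rightarrow> 'e set \<Rightarrow> ('e \<Rightarrow> 'v) \<Rightarrow> ('e \<Rightarrow> 'v) \<Rightarrow> 'v \<Rightarrow> 'e set \<Rightarrow> 'v set" where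
  "I_set V E tail head \<rho> C = {\<sigma> \<in> sources V E tail head. \<not> reach tail head (E - C) \<sigma> \<rho>}"

definition Lambda :: "'v set \<Rightarrow> 'e set \<Rightarrow> ('e \<Rightarrow> 'v) \<Rightarrow> ('e \<Rightarrow> 'v) \<Rightarrow> 'v \<Rightarrow> 'e set set" where
  "Lambda V E tail head \<rho> = {C. C \<subseteq> E \<and> I_set V E tail head \<rho> C \<noteq> {}}"

definition Wr :: "'e set \<Rightarrow> nat \<Rightarrow> 'e set set" where
  "Wr E r = {W. W \<subseteq> E \<and> card W \<le> r}"

definition Omega :: "'v set \<Rightarrow> 'e set \<Rightarrow> ('e \<Rightarrow> 'v) \<Rightarrow> ('e \<Rightarrow> 'v) \<Rightarrow> 'v \<Rightarrow> 'e set \<Rightarrow> nat" where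
  "Omega V E tail head \<rho> W = Min {card C - card W | C. C \<in> Lambda V E tail head \<rho> \<and> W \<subseteq> C \<and>
       D_set V E tail head W \<subseteq> I_set V E tail head \<rho> C}"

text \<open>Subdivided graph w.r.t. W: node Inl v for each original node, node Inr e = v_e
for e \<in> W; edge (e,0) is an unsubdivided edge e \<notin> W, (e,1) = e^1, (e,2) = e^2.\<close>

definition sub_edges :: "'e set \<Rightarrow> 'e set \<Rightarrow> ('e \<times> nat) set" where
  "sub_edges E W = {(e, 0) | e. e \<in> E \<and> e \<notin> W} \<union> {(e, 1) | e. e \<in> W} \<union> {(e, 2) | e. e \<in> W}"

definition sub_tl :: "('e \<Rightarrow> 'v) \<Rightarrow> 'e \<times> nat \<Rightarrow> 'v + 'e" where
  "sub_tl tail x = (if snd x = 2 then Inr (fst x) else Inl (tail (fst x)))"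

definition sub_hd :: "('e \<Rightarrow> 'v) \<Rightarrow> 'e \<times> nat \<Rightarrow> 'v + 'e" where
  "sub_hd head x = (if snd x = 1 then Inr (fst x) else Inl (head (fst x)))"

text \<open>C is a cut separating W from U: obtained (via e^1, e^2 \<mapsto> e) from an edge set Ct
of the subdivided graph whose deletion leaves no path from U to any v_e.\<close>
definition is_cut :: "'e set \<Rightarrow> ('e \<Rightarrow> 'v) \<Rightarrow> ('e \<Rightarrow> 'v) \<Rightarrow> 'v set \<Rightarrow> 'e set \<Rightarrow> 'e set \<Rightarrow> bool" where
  "is_cut E tail head U W C \<longleftrightarrow>
     (\<exists>Ct. Ct \<subseteq> sub_edges E W \<and> C = fst ` Ct \<and>
        (\<forall>u\<in>U. \<forall>e\<in>W. \<not> reach (sub_tl tail) (sub_hd head) (sub_edges E W - Ct) (Inl u) (Inr e)))"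

definition is_min_cut :: "'e set \<Rightarrow> ('e \<Rightarrow> 'v) \<Rightarrow> ('e \<Rightarrow> 'v) \<Rightarrow> 'v set \<Rightarrow> 'e set \<Rightarrow> 'e set \<Rightarrow> bool" where
  "is_min_cut E tail head U W C \<longleftrightarrow>
     is_cut E tail head U W C \<and> (\<forall>C'. is_cut E tail head U W C' \<longrightarrow> card C \<le> card C')"

definition is_primary_min_cut :: "'e set \<Rightarrow> ('e \<Rightarrow> 'v) \<Rightarrow> ('e \<Rightarrow> 'v) \<Rightarrow> 'v set \<Rightarrow> 'e set \<Rightarrow> 'e set \<Rightarrow> bool" where
  "is_primary_min_cut E tail head U W P \<longleftrightarrow>
     is_min_cut E tail head U W P \<and> (\<forall>C. is_min_cut E tail head U W C \<longrightarrow> is_cut E tail head U C P)"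

definition hat :: "'v set \<Rightarrow> 'e set \<Rightarrow> ('e \<Rightarrow> 'v) \<Rightarrow> ('e \<Rightarrow> 'v) \<Rightarrow> 'e set \<Rightarrow> 'e set" where
  "hat V E tail head W = (THE P. is_primary_min_cut E tail head (D_set V E tail head W) W P)"

end

theory Submission
  imports Defs
begin


lemma arcs_mem: "(x,y) \<in> arcs t h F \<longleftrightarrow> (\<exists>f\<in>F. x = t f \<and> y = h f)"
  by (auto simp: arcs_def)

lemma reach_refl: "reach t h F x x"
  by (simp add: reach_def)

lemma reach_step: "reach t h F x a \<Longrightarrow> f \<in> F \<Longrightarrow> t f = a \<Longrightarrow> reach t h F x (h f)"
  unfolding reach_def by (rule rtrancl_into_rtrancl) (auto simp: arcs_mem)

lemma reach_trans: "reach t h F x y \<Longrightarrow> reach t h F y z \<Longrightarrow> reach t h F x z"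
  unfolding reach_def by (rule rtrancl_trans)

lemma reach_mono: "F \<subseteq> G \<Longrightarrow> reach t h F x y \<Longrightarrow> reach t h G x y"
proof -
  assume "F \<subseteq> G" "reach t h F x y"
  then have "arcs t h F \<subseteq> arcs t h G" by (auto simp: arcs_def)
  then show ?thesis using \<open>reach t h F x y\<close> unfolding reach_def by (meson rtrancl_mono subsetD)
qed

lemma reach_induct[consumes 1, case_names refl step]:
  assumes "reach t h F x y" "P x"
    "\<And>f. f \<in> F \<Longrightarrow> reach t h F x (t f) \<Longrightarrow> P (t f) \<Longrightarrow> P (h f)"
  shows "P y"
  using assms(1) unfolding reach_def
proof (induction rule: rtrancl_induct)
  case base
  then show ?case using assms(2) by simp
next
  case (step y z)
  then obtain f where "f \<in> F" "y = t f" "z = h f" by (auto simp: arcs_mem)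
  then show ?case using step assms(3) unfolding reach_def by blast
qed

lemma reach_empty: "reach t h {} x y \<longleftrightarrow> x = y"
  by (simp add: reach_def arcs_def)

lemma first_edge:
  assumes "reach t h F u x" "\<not> reach t h (F - P) u x"
  shows "\<exists>p\<in>F \<inter> P. reach t h (F - P) u (t p) \<and> reach t h F (h p) x"
proof -
  have "\<not> reach t h (F - P) u x \<longrightarrow> (\<exists>p\<in>F \<inter> P. reach t h (F - P) u (t p) \<and> reach t h F (h p) x)"
    using assms(1)
  proof (induction rule: reach_induct)
    case refl
    then show ?case by (simp add: reach_refl)
  next
    case (step f)
    show ?case
    proof
      assume nr: "\<not> reach t h (F - P) u (h f)"
      show "\<exists>p\<in>F \<inter> P. reach t h (F - P) u (t p) \<and> reach t h F (h p) (h f)"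
      proof (cases "reach t h (F - P) u (t f)")
        case True
        have "f \<in> P"
        proof (rule ccontr)
          assume "f \<notin> P"
          then have "f \<in> F - P" using step(1) by simp
          from reach_step[OF True this refl] nr show False by simp
        qed
        then have "f \<in> F \<inter> P" using step(1) by simp
        moreover have "reach t h F (h f) (h f)" by (rule reach_refl)
        ultimately show ?thesis using True by blast
      next
        case False
        then obtain p where p: "p\<in>F \<inter> P" "reach t h (F - P) u (t p)" "reach t h F (h p) (t f)"
          using step(3) by blast
        have "reach t h F (h p) (h f)" by (rule reach_step[OF p(3) step(1) refl])
        then show ?thesis using p(1,2) by blast
      qed
    qed
  qed
  then show ?thesis using assms(2) by blast
qed

lemma sub_simps[simp]:
  "sub_tl tail (f, 0) = Inl (tail f)" "sub_tl tail (f, Suc 0) = Inl (tail f)" "sub_tl tail (f, 2) = Inr f"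
  "sub_hd head (f, 0) = Inl (head f)" "sub_hd head (f, Suc 0) = Inr f" "sub_hd head (f, 2) = Inl (head f)"
  by (simp_all add: sub_tl_def sub_hd_def)

lemma cut_iff:
  assumes WE: "W \<subseteq> E"
  shows "is_cut E tail head U W Q \<longleftrightarrow>
    (Q \<subseteq> E \<and> (\<forall>u\<in>U. \<forall>e\<in>W - Q. \<not> reach tail head (E - Q) u (tail e)))"
proof
  assume "is_cut E tail head U W Q"
  then obtain Ct where Ct: "Ct \<subseteq> sub_edges E W" "Q = fst ` Ct"
    "\<forall>u\<in>U. \<forall>e\<in>W. \<not> reach (sub_tl tail) (sub_hd head) (sub_edges E W - Ct) (Inl u) (Inr e)"
    unfolding is_cut_def by blast
  have QE: "Q \<subseteq> E"
  proof
    fix q assume "q \<in> Q"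
    then obtain k where "(q,k) \<in> Ct" using Ct(2) by force
    then show "q \<in> E" using Ct(1) WE unfolding sub_edges_def by blast
  qed
  have L1: "reach (sub_tl tail) (sub_hd head) (sub_edges E W - Ct) (Inl x) (Inl y)"
    if "reach tail head (E - Q) x y" for x y
    using that
  proof (induction rule: reach_induct)
    case refl
    then show ?case by (rule reach_refl)
  next
    case (step f)
    have nf: "\<And>k. (f, k) \<notin> Ct" using step(1) Ct(2) by force
    show ?case
    proof (cases "f \<in> W")
      case True
      have a: "(f,1) \<in> sub_edges E W - Ct" "(f,2) \<in> sub_edges E W - Ct"
        using True nf by (auto simp: sub_edges_def)
      have "reach (sub_tl tail) (sub_hd head) (sub_edges E W - Ct) (Inl x) (Inr f)"
        using reach_step[OF step(3) a(1)] by simp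
      from reach_step[OF this a(2)] show ?thesis by simp
    next
      case False
      have a: "(f,0) \<in> sub_edges E W - Ct"
        using False nf step(1) by (auto simp: sub_edges_def)
      from reach_step[OF step(3) a] show ?thesis by simp
    qed
  qed
  show "Q \<subseteq> E \<and> (\<forall>u\<in>U. \<forall>e\<in>W - Q. \<not> reach tail head (E - Q) u (tail e))"
  proof (intro conjI QE ballI notI)
    fix u e assume u: "u \<in> U" and e: "e \<in> W - Q" and r: "reach tail head (E - Q) u (tail e)"
    have a: "(e,1) \<in> sub_edges E W - Ct" using e Ct(2) by (force simp: sub_edges_def)
    from reach_step[OF L1[OF r] a] have "reach (sub_tl tail) (sub_hd head) (sub_edges E W - Ct) (Inl u) (Inr e)"
      by simp
    then show False using Ct(3) u e by blast
  qed
next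
  assume A: "Q \<subseteq> E \<and> (\<forall>u\<in>U. \<forall>e\<in>W - Q. \<not> reach tail head (E - Q) u (tail e))"
  define Ct where "Ct = {(c,0::nat) | c. c \<in> Q \<and> c \<notin> W} \<union> {(c,1) | c. c \<in> Q \<and> c \<in> W}"
  have C1: "Ct \<subseteq> sub_edges E W" using A by (auto simp: Ct_def sub_edges_def)
  have C2: "Q = fst ` Ct"
  proof
    show "Q \<subseteq> fst ` Ct"
    proof
      fix q assume "q \<in> Q"
      then have "(q, if q \<in> W then 1 else 0) \<in> Ct" by (auto simp: Ct_def)
      then show "q \<in> fst ` Ct" by force
    qed
  qed (auto simp: Ct_def)
  have L2: "case y of Inl v \<Rightarrow> reach tail head (E - Q) u v
      | Inr f \<Rightarrow> f \<in> W - Q \<and> reach tail head (E - Q) u (tail f)"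
    if "reach (sub_tl tail) (sub_hd head) (sub_edges E W - Ct) (Inl u) y" for u y
    using that
  proof (induction rule: reach_induct)
    case refl
    then show ?case by (simp add: reach_refl)
  next
    case (step x)
    obtain f k where x: "x = (f,k)" by (cases x)
    from step(1) x consider
        "k = 0" "f \<in> E" "f \<notin> W" "f \<notin> Q"
      | "k = 1" "f \<in> W" "f \<notin> Q"
      | "k = 2" "f \<in> W"
      by (auto simp: sub_edges_def Ct_def)
    then show ?case
    proof cases
      case 1
      then show ?thesis using step(3) x reach_step[of tail head "E - Q" u "tail f" f]
        by simp
    next
      case 2
      then show ?thesis using step(3) x by simp
    next
      case 3
      then show ?thesis using step(3) x reach_step[of tail head "E - Q" u "tail f" f] WE
        by auto
    qed
  qed
  show "is_cut E tail head U W Q"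
    unfolding is_cut_def
  proof (rule exI[of _ Ct], intro conjI C1 C2 ballI notI)
    fix u e assume "u \<in> U" "e \<in> W"
      "reach (sub_tl tail) (sub_hd head) (sub_edges E W - Ct) (Inl u) (Inr e)"
    from L2[OF this(3)] this(1) A show False by auto
  qed
qed



locale netw =
  fixes V :: "'v set" and E :: "'e set" and tail head :: "'e \<Rightarrow> 'v" and \<rho> :: 'v
  assumes net: "network V E tail head \<rho>"
begin

abbreviation "S \<equiv> sources V E tail head"
abbreviation "R \<equiv> reach tail head"
abbreviation "D \<equiv> D_set V E tail head"
abbreviation "I \<equiv> I_set V E tail head \<rho>"
abbreviation "Om \<equiv> Omega V E tail head \<rho>"

lemma finE: "finite E" using net by (simp add: network_def)
lemma edgeV: "e \<in> E \<Longrightarrow> tail e \<in> V \<and> head e \<in> V" using net by (simp add: network_def)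
lemma rhoV: "\<rho> \<in> V" using net by (simp add: network_def)
lemma rho_notS: "\<rho> \<notin> S" using net by (simp add: network_def)

lemma reach_from_source: "v \<in> V \<Longrightarrow> \<exists>\<sigma>\<in>S. R E \<sigma> v"
proof -
  have wf: "wf (arcs tail head E)"
  proof (rule finite_acyclic_wf)
    show "finite (arcs tail head E)" using finE unfolding arcs_def by simp
    show "acyclic (arcs tail head E)" using net by (simp add: network_def)
  qed
  have "v \<in> V \<longrightarrow> (\<exists>\<sigma>\<in>S. R E \<sigma> v)"
  proof (induction v rule: wf_induct[OF wf])
    case (1 v)
    show ?case
    proof
      assume vV: "v \<in> V"
      show "\<exists>\<sigma>\<in>S. R E \<sigma> v"
      proof (cases "\<exists>e\<in>E. head e = v")
        case True
        then obtain e where e: "e \<in> E" "head e = v" by blast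
        have "(tail e, v) \<in> arcs tail head E" using e by (auto simp: arcs_mem)
        with 1 edgeV[OF e(1)] obtain \<sigma> where "\<sigma> \<in> S" "R E \<sigma> (tail e)" by blast
        with reach_step[OF this(2) e(1) refl] e(2) show ?thesis by auto
      next
        case False
        then have "v \<in> S" using vV by (simp add: sources_def)
        then show ?thesis using reach_refl[of tail head E v] by blast
      qed
    qed
  qed
  then show "v \<in> V \<Longrightarrow> ?thesis" by blast
qed

lemma S_ne: "S \<noteq> {}" using reach_from_source[OF rhoV] by blast

lemma D_ne: assumes "W \<subseteq> E" "W \<noteq> {}" shows "D W \<noteq> {}"
proof -
  obtain e where e: "e \<in> W" using assms(2) by blast
  then have "e \<in> E" using assms(1) by blast
  then obtain \<sigma> where "\<sigma> \<in> S" "R E \<sigma> (tail e)" using reach_from_source edgeV by blast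
  then have "\<sigma> \<in> D W" using e \<open>e \<in> E\<close> by (auto simp: D_set_def to_edge_def)
  then show ?thesis by blast
qed

lemma D_sub_S: "D W \<subseteq> S" by (auto simp: D_set_def)

definition OK :: "'e set \<Rightarrow> 'e set \<Rightarrow> bool" where
  "OK W C \<longleftrightarrow> C \<in> Lambda V E tail head \<rho> \<and> W \<subseteq> C \<and> D W \<subseteq> I C"

lemma I_E: "I E = S"
  using rho_notS by (auto simp: I_set_def reach_empty)

lemma Om_props:
  assumes "W \<subseteq> E"
  shows "\<exists>C. OK W C \<and> Om W = card C - card W"
    and "OK W C \<Longrightarrow> Om W \<le> card C - card W"
proof -
  have eq: "{card C - card W | C. C \<in> Lambda V E tail head \<rho> \<and> W \<subseteq> C \<and> D W \<subseteq> I C}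
      = (\<lambda>C. card C - card W) ` {C. OK W C}" by (auto simp: OK_def)
  have fin: "finite {C. OK W C}"
    by (rule finite_subset[of _ "Pow E"]) (auto simp: OK_def Lambda_def finE)
  have "OK W E" using assms S_ne D_sub_S I_E by (auto simp: OK_def Lambda_def)
  then have ne: "{C. OK W C} \<noteq> {}" by blast
  have om: "Om W = Min ((\<lambda>C. card C - card W) ` {C. OK W C})"
    unfolding Omega_def eq ..
  have "Om W \<in> (\<lambda>C. card C - card W) ` {C. OK W C}"
    unfolding om by (rule Min_in) (use fin ne in auto)
  then show "\<exists>C. OK W C \<and> Om W = card C - card W" by auto
  show "OK W C \<Longrightarrow> Om W \<le> card C - card W"
    using Min_le[of "(\<lambda>C. card C - card W) ` {C. OK W C}"] fin om by auto
qed

definition sep :: "'v set \<Rightarrow> 'e set \<Rightarrow> 'e set \<Rightarrow> bool" where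
  "sep U W Q \<longleftrightarrow> Q \<subseteq> E \<and> (\<forall>u\<in>U. \<forall>e\<in>W - Q. \<not> R (E - Q) u (tail e))"

lemma cut_sep: "W \<subseteq> E \<Longrightarrow> is_cut E tail head U W Q \<longleftrightarrow> sep U W Q"
  unfolding sep_def by (rule cut_iff)

lemma lemmaA:
  assumes WE: "W \<subseteq> E" and sp: "sep (D W) W Q" and DQ: "D Q \<subseteq> D W" and cd: "card Q \<le> card W"
  shows "Om Q \<le> Om W"
proof (cases "W = {}")
  case True
  have "finite Q" using sp finE unfolding sep_def using finite_subset by blast
  then have "Q = {}" using cd True by simp
  then show ?thesis using True by simp
next
  case False
  have QE: "Q \<subseteq> E" using sp by (simp add: sep_def)
  obtain C where C: "OK W C" "Om W = card C - card W" using Om_props(1)[OF WE] by blast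
  have CE: "C \<subseteq> E" and WC: "W \<subseteq> C" and DI: "D W \<subseteq> I C"
    using C(1) by (auto simp: OK_def Lambda_def)
  define C' where "C' = (C - W) \<union> Q"
  have C'E: "C' \<subseteq> E" using CE QE by (auto simp: C'_def)
  have DI': "D W \<subseteq> I C'"
  proof
    fix \<sigma> assume s: "\<sigma> \<in> D W"
    then have sS: "\<sigma> \<in> S" using D_sub_S by blast
    have nC: "\<not> R (E - C) \<sigma> \<rho>" using DI s by (auto simp: I_set_def)
    show "\<sigma> \<in> I C'"
    proof (rule ccontr)
      assume "\<sigma> \<notin> I C'"
      then have r: "R (E - C') \<sigma> \<rho>" using sS by (auto simp: I_set_def)
      have nr: "\<not> R (E - C' - C) \<sigma> \<rho>"
      proof
        assume "R (E - C' - C) \<sigma> \<rho>"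
        then have "R (E - C) \<sigma> \<rho>" by (rule reach_mono[rotated]) blast
        with nC show False by simp
      qed
      obtain p where p: "p \<in> (E - C') \<inter> C" "R (E - C' - C) \<sigma> (tail p)"
        using first_edge[OF r nr] by blast
      have pW: "p \<in> W - Q" using p(1) by (auto simp: C'_def)
      have "R (E - Q) \<sigma> (tail p)" using p(2) by (rule reach_mono[rotated]) (auto simp: C'_def)
      then show False using sp s pW by (auto simp: sep_def)
    qed
  qed
  have ok: "OK Q C'"
    unfolding OK_def Lambda_def using C'E DI' DQ D_ne[OF WE False] by (auto simp: C'_def)
  have finC: "finite C" using CE finE finite_subset by blast
  have "card C' \<le> card (C - W) + card Q" unfolding C'_def by (rule card_Un_le)
  moreover have "card (C - W) = card C - card W" using WC finC by (simp add: card_Diff_subset finite_subset)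
  ultimately have "card C' - card Q \<le> card C - card W" by simp
  then show ?thesis using Om_props(2)[OF QE ok] C(2) by simp
qed

definition filt :: "'e set \<Rightarrow> 'e set \<Rightarrow> 'e set" where
  "filt W Q = {q \<in> Q. D {q} \<subseteq> D W}"

lemma filt_props:
  assumes WE: "W \<subseteq> E" and sp: "sep (D W) W Q"
  shows "sep (D W) W (filt W Q)" "D (filt W Q) \<subseteq> D W" "filt W Q \<subseteq> Q"
proof -
  show sub: "filt W Q \<subseteq> Q" by (auto simp: filt_def)
  show "D (filt W Q) \<subseteq> D W"
  proof
    fix \<sigma> assume "\<sigma> \<in> D (filt W Q)"
    then obtain q where "q \<in> filt W Q" "\<sigma> \<in> D {q}" by (auto simp: D_set_def)
    then show "\<sigma> \<in> D W" by (auto simp: filt_def)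
  qed
  have QE: "Q \<subseteq> E" using sp by (simp add: sep_def)
  have "\<not> R (E - filt W Q) u (tail e)" if u: "u \<in> D W" and e: "e \<in> W - filt W Q" for u e
  proof
    assume r: "R (E - filt W Q) u (tail e)"
    have eE: "e \<in> E" using e WE by blast
    have DeW: "D {q} \<subseteq> D W" if "q \<in> E" "\<And>\<sigma>. R E \<sigma> (tail q) \<Longrightarrow> R E \<sigma> (tail e)" for q
    proof
      fix \<sigma> assume "\<sigma> \<in> D {q}"
      then have "\<sigma> \<in> S" "R E \<sigma> (tail q)" by (auto simp: D_set_def to_edge_def)
      then have "R E \<sigma> (tail e)" using that(2) by blast
      then show "\<sigma> \<in> D W" using \<open>\<sigma> \<in> S\<close> e eE by (auto simp: D_set_def to_edge_def)
    qed
    have "e \<notin> Q"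
    proof
      assume "e \<in> Q"
      moreover have "D {e} \<subseteq> D W" using DeW[OF eE] by blast
      ultimately show False using e by (auto simp: filt_def)
    qed
    then have nq: "\<not> R (E - Q) u (tail e)" using sp u e by (auto simp: sep_def)
    have nr: "\<not> R (E - filt W Q - Q) u (tail e)"
    proof
      assume "R (E - filt W Q - Q) u (tail e)"
      then have "R (E - Q) u (tail e)" by (rule reach_mono[rotated]) blast
      with nq show False by simp
    qed
    obtain p where p: "p \<in> (E - filt W Q) \<inter> Q" "R (E - filt W Q) (head p) (tail e)"
      using first_edge[OF r nr] by blast
    have "R E (head p) (tail e)" using p(2) by (rule reach_mono[rotated]) blast
    have "R E \<sigma> (tail e)" if "R E \<sigma> (tail p)" for \<sigma>
      using reach_trans[OF reach_step[OF that _ refl] \<open>R E (head p) (tail e)\<close>] p(1) by blast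
    then have "D {p} \<subseteq> D W" using DeW p(1) by blast
    then show False using p(1) by (auto simp: filt_def)
  qed
  then show "sep (D W) W (filt W Q)" using sub QE by (auto simp: sep_def)
qed

definition Edg :: "'e set \<Rightarrow> 'e set" where
  "Edg W = {f \<in> E - W. \<exists>u\<in>D W. R (E - W) u (tail f)}"

lemma Edg_sub:
  assumes sp: "sep (D W) W Q" and DQ: "D Q \<subseteq> D W"
  shows "Edg Q \<subseteq> Edg W"
proof
  fix f assume "f \<in> Edg Q"
  then obtain u where f: "f \<in> E - Q" "u \<in> D Q" "R (E - Q) u (tail f)" by (auto simp: Edg_def)
  have uW: "u \<in> D W" using f(2) DQ by blast
  have "R (E - W) u x" if "R (E - Q) u x" for x
    using that
  proof (induction rule: reach_induct)
    case refl then show ?case by (rule reach_refl)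
  next
    case (step g)
    have "g \<notin> W" using step(1,2) sp uW by (auto simp: sep_def)
    then show ?case using reach_step[OF step(3) _ refl] step(1) by blast
  qed
  moreover have "f \<notin> W" using f sp uW by (auto simp: sep_def)
  ultimately show "f \<in> Edg W" using f uW by (auto simp: Edg_def)
qed

end


context netw
begin

lemma main:
  fixes r :: nat
  shows "\<exists>Ws. Ws \<in> Wr E r \<and> hat V E tail head Ws = Ws \<and> (\<forall>W\<in>Wr E r. Om Ws \<le> Om W)"
proof -
  define X where "X = Wr E r"
  have finX: "finite X" unfolding X_def Wr_def
    by (rule finite_subset[of _ "Pow E"]) (auto simp: finE)
  have eX: "{} \<in> X" by (simp add: X_def Wr_def)
  define m1 where "m1 = Min (Om ` X)"
  define X1 where "X1 = {W \<in> X. Om W = m1}"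
  have "m1 \<in> Om ` X" unfolding m1_def using finX eX by (intro Min_in) auto
  then have X1ne: "X1 \<noteq> {}" by (auto simp: X1_def)
  have finX1: "finite X1" using finX by (simp add: X1_def)
  define m2 where "m2 = Min (card ` X1)"
  define X2 where "X2 = {W \<in> X1. card W = m2}"
  have "m2 \<in> card ` X1" unfolding m2_def using finX1 X1ne by (intro Min_in) auto
  then have X2ne: "X2 \<noteq> {}" by (auto simp: X2_def)
  have finX2: "finite X2" using finX1 by (simp add: X2_def)
  define m3 where "m3 = Min ((\<lambda>W. card (Edg W)) ` X2)"
  have "m3 \<in> (\<lambda>W. card (Edg W)) ` X2" unfolding m3_def using finX2 X2ne by (intro Min_in) auto
  then obtain Ws where Ws: "Ws \<in> X2" "card (Edg Ws) = m3" by auto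
  have WsX: "Ws \<in> X" and Wsm1: "Om Ws = m1" and Wsm2: "card Ws = m2" using Ws by (auto simp: X2_def X1_def)
  have WsE: "Ws \<subseteq> E" using WsX by (simp add: X_def Wr_def)
  have Wsr: "card Ws \<le> r" using WsX by (simp add: X_def Wr_def)
  have minOm: "Om Ws \<le> Om W" if "W \<in> X" for W
    using Wsm1 that finX unfolding m1_def by simp
  have better: "card W2 = card Ws \<and> card (Edg Ws) \<le> card (Edg W2)"
    if "W2 \<in> X" "Om W2 \<le> Om Ws" "card W2 \<le> card Ws" for W2
  proof -
    have "Om W2 = m1" using minOm[OF that(1)] that(2) Wsm1 by simp
    then have "W2 \<in> X1" using that(1) by (simp add: X1_def)
    then have "m2 \<le> card W2" using finX1 unfolding m2_def by simp
    then have "card W2 = m2" using that(3) Wsm2 by simp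
    then have "W2 \<in> X2" using \<open>W2 \<in> X1\<close> by (simp add: X2_def)
    then have "m3 \<le> card (Edg W2)" using finX2 unfolding m3_def by simp
    then show ?thesis using Ws(2) \<open>card W2 = m2\<close> Wsm2 by simp
  qed
  define U where "U = D Ws"
  have filtgood: "filt Ws Q \<in> X \<and> Om (filt Ws Q) \<le> Om Ws \<and> card (filt Ws Q) \<le> card Q
       \<and> sep U Ws (filt Ws Q) \<and> D (filt Ws Q) \<subseteq> U \<and> filt Ws Q \<subseteq> Q"
    if sp: "sep U Ws Q" and cQ: "card Q \<le> card Ws" for Q
  proof -
    have fp: "sep U Ws (filt Ws Q)" "D (filt Ws Q) \<subseteq> U" "filt Ws Q \<subseteq> Q"
      using filt_props[OF WsE] sp unfolding U_def by auto
    have QE: "Q \<subseteq> E" using sp by (simp add: sep_def)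
    have finQ: "finite Q" using QE finE finite_subset by blast
    have c: "card (filt Ws Q) \<le> card Q" using fp(3) finQ by (rule card_mono[rotated])
    have "Om (filt Ws Q) \<le> Om Ws"
      using lemmaA[OF WsE] fp c cQ unfolding U_def by simp
    moreover have "filt Ws Q \<in> X" using fp(3) QE c cQ Wsr by (auto simp: X_def Wr_def)
    ultimately show ?thesis using fp c by simp
  qed
  have mincut: "card Ws \<le> card Q" if sp: "sep U Ws Q" for Q
  proof (rule ccontr)
    assume "\<not> card Ws \<le> card Q"
    then have cQ: "card Q < card Ws" by simp
    then show False using filtgood[OF sp] better[of "filt Ws Q"] by fastforce
  qed
  have upstream: "\<not> R (E - Ws) u (tail c)"
    if spC: "sep U Ws C" and cC: "card C \<le> card Ws" and u: "u \<in> U" and c: "c \<in> C - Ws" for C u c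
  proof
    assume r0: "R (E - Ws) u (tail c)"
    have CE: "C \<subseteq> E" using spC by (simp add: sep_def)
    have finC: "finite C" using CE finE finite_subset by blast
    define W1 where "W1 = {c \<in> C. \<exists>u\<in>U. R (E - Ws) u (tail c) \<and> R (E - C) u (tail c)}"
    have W1C: "W1 \<subseteq> C" by (auto simp: W1_def)
    have inv: "R (E - Ws) u x \<and> R (E - C) u x" if "u \<in> U" "R (E - W1) u x" for u x
      using that(2)
    proof (induction rule: reach_induct)
      case refl then show ?case by (simp add: reach_refl)
    next
      case (step f)
      have "f \<notin> C" using step(1,3) that(1) by (auto simp: W1_def)
      moreover have "f \<notin> Ws" using step(3) that(1) spC \<open>f \<notin> C\<close> by (auto simp: sep_def)
      ultimately show ?case using step(1,3) reach_step[of tail head "E - Ws" u "tail f" f]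
          reach_step[of tail head "E - C" u "tail f" f] by blast
    qed
    have sp1: "sep U Ws W1"
      unfolding sep_def
    proof (intro conjI ballI notI)
      show "W1 \<subseteq> E" using W1C CE by blast
    next
      fix u e assume u: "u \<in> U" and e: "e \<in> Ws - W1" and r: "R (E - W1) u (tail e)"
      from inv[OF u r] have a: "R (E - Ws) u (tail e)" "R (E - C) u (tail e)" by auto
      show False
      proof (cases "e \<in> C")
        case True then show False using a u e by (auto simp: W1_def)
      next
        case False then show False using a(2) u e spC by (auto simp: sep_def)
      qed
    qed
    have cW1: "card W1 \<le> card Ws" using card_mono[OF finC W1C] cC by simp
    obtain c1 where c1: "c1 \<in> W1" "c1 \<notin> Ws" "R (E - Ws) u (tail c1)"
    proof (cases "R (E - Ws - C) u (tail c)")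
      case True
      have "R (E - C) u (tail c)" using True by (rule reach_mono[rotated]) blast
      then have "c \<in> W1" using c u r0 by (auto simp: W1_def)
      then show ?thesis using that c r0 by blast
    next
      case False
      obtain p where p: "p \<in> (E - Ws) \<inter> C" "R (E - Ws - C) u (tail p)"
        using first_edge[OF r0 False] by blast
      have a: "R (E - C) u (tail p)" "R (E - Ws) u (tail p)" using p(2)
        by (auto intro: reach_mono[rotated])
      then have "p \<in> W1" using p(1) u by (auto simp: W1_def)
      then show ?thesis using that p(1) a(2) by blast
    qed
    define W2 where "W2 = filt Ws W1"
    have g: "W2 \<in> X" "Om W2 \<le> Om Ws" "card W2 \<le> card W1" "sep U Ws W2" "D W2 \<subseteq> U" "W2 \<subseteq> W1"
      using filtgood[OF sp1 cW1] unfolding W2_def by auto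
    have b: "card W2 = card Ws" "card (Edg Ws) \<le> card (Edg W2)"
      using better[OF g(1,2)] g(3) cW1 by auto
    have finW1: "finite W1" using finC W1C finite_subset by blast
    have "c1 \<in> W2"
    proof (rule ccontr)
      assume "c1 \<notin> W2"
      then have "W2 \<subset> W1" using g(6) c1(1) by blast
      then have "card W2 < card W1" using finW1 by (rule psubset_card_mono[rotated])
      then show False using b(1) cW1 by simp
    qed
    have ES: "Edg W2 \<subseteq> Edg Ws" using Edg_sub g(4,5) unfolding U_def by blast
    have "c1 \<in> Edg Ws" using c1 u W1C CE unfolding Edg_def U_def by blast
    moreover have "c1 \<notin> Edg W2" using \<open>c1 \<in> W2\<close> by (simp add: Edg_def)
    ultimately have "Edg W2 \<subset> Edg Ws" using ES by blast
    then have "card (Edg W2) < card (Edg Ws)"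
      by (rule psubset_card_mono[rotated]) (auto simp: Edg_def finE)
    then show False using b(2) by simp
  qed
  have spWs: "sep U Ws Ws" using WsE by (simp add: sep_def)
  have prim: "is_primary_min_cut E tail head U Ws Ws"
    unfolding is_primary_min_cut_def is_min_cut_def
  proof (intro conjI allI impI)
    show "is_cut E tail head U Ws Ws" using cut_sep[OF WsE] spWs by simp
  next
    fix C' assume "is_cut E tail head U Ws C'"
    then show "card Ws \<le> card C'" using cut_sep[OF WsE] mincut by simp
  next
    fix C assume C: "is_cut E tail head U Ws C \<and> (\<forall>C'. is_cut E tail head U Ws C' \<longrightarrow> card C \<le> card C')"
    then have spC: "sep U Ws C" using cut_sep[OF WsE] by simp
    have cC: "card C \<le> card Ws" using C cut_sep[OF WsE] spWs by simp
    have CE: "C \<subseteq> E" using spC by (simp add: sep_def)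
    have "sep U C Ws" unfolding sep_def using WsE upstream[OF spC cC] by blast
    then show "is_cut E tail head U C Ws" using cut_sep[OF CE] by simp
  qed
  have uniq: "P = Ws" if P: "is_primary_min_cut E tail head U Ws P" for P
  proof -
    have spP: "sep U Ws P" and cP: "card P \<le> card Ws"
      using P cut_sep[OF WsE] spWs unfolding is_primary_min_cut_def is_min_cut_def by auto
    have PE: "P \<subseteq> E" using spP by (simp add: sep_def)
    have finP: "finite P" using PE finE finite_subset by blast
    have "Ws \<subseteq> P"
    proof
      fix e assume e: "e \<in> Ws"
      show "e \<in> P"
      proof (rule ccontr)
        assume eP: "e \<notin> P"
        have finWs: "finite Ws" using WsE finE finite_subset by blast
        have "card (Ws - {e}) < card Ws" by (rule card_Diff1_less[OF finWs e])
        then have "\<not> sep U Ws (Ws - {e})" using mincut by fastforce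
        then obtain u where u: "u \<in> U" and r: "R (E - (Ws - {e})) u (tail e)"
          using WsE e by (auto simp: sep_def)
        have eq: "E - (Ws - {e}) - {e} = E - Ws" using e by blast
        have r2: "R (E - Ws) u (tail e)"
        proof (rule ccontr)
          assume "\<not> R (E - Ws) u (tail e)"
          then obtain p where "p \<in> {e}" "R (E - (Ws - {e}) - {e}) u (tail p)"
            using first_edge[OF r] eq by fastforce
          then show False using \<open>\<not> R (E - Ws) u (tail e)\<close> eq by simp
        qed
        have nq: "\<not> R (E - P) u (tail e)" using spP u e eP by (auto simp: sep_def)
        have nr: "\<not> R (E - Ws - P) u (tail e)"
        proof
          assume "R (E - Ws - P) u (tail e)"
          then have "R (E - P) u (tail e)" by (rule reach_mono[rotated]) blast
          with nq show False by simp
        qed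
        obtain p where p: "p \<in> (E - Ws) \<inter> P" "R (E - Ws - P) u (tail p)"
          using first_edge[OF r2 nr] by blast
        have "R (E - Ws) u (tail p)" using p(2) by (rule reach_mono[rotated]) blast
        then show False using upstream[OF spP cP u] p(1) by blast
      qed
    qed
    then show ?thesis using card_subset_eq[OF finP] mincut[OF spP] cP by (metis le_antisym card_mono[OF finP])
  qed
  have "hat V E tail head Ws = Ws"
    unfolding hat_def U_def[symmetric]
    using prim uniq by (rule the_equality)
  then show ?thesis using WsX minOm unfolding X_def by blast
qed

end

theorem lemma8:
  fixes V :: "'v set" and E :: "'e set" and tail head :: "'e \<Rightarrow> 'v" and \<rho> :: 'v and r :: nat
  assumes "network V E tail head \<rho>"
  shows "Min (Omega V E tail head \<rho> ` Wr E r) =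
         Min (Omega V E tail head \<rho> ` {W \<in> Wr E r. W = hat V E tail head W})"
proof -
  interpret netw V E tail head \<rho> using assms by (unfold_locales)
  obtain Ws where Ws: "Ws \<in> Wr E r" "hat V E tail head Ws = Ws" "\<forall>W\<in>Wr E r. Om Ws \<le> Om W"
    using main[of r] by blast
  have finX: "finite (Wr E r)" unfolding Wr_def
    by (rule finite_subset[of _ "Pow E"]) (auto simp: finE)
  let ?A = "Om ` Wr E r" and ?B = "Om ` {W \<in> Wr E r. W = hat V E tail head W}"
  have BA: "?B \<subseteq> ?A" by blast
  have WsB: "Om Ws \<in> ?B" using Ws by auto
  have "Min ?A \<le> Min ?B" by (rule Min_antimono[OF BA]) (use WsB finX in auto)
  moreover have "Min ?B \<le> Om Ws" using WsB finX by (intro Min_le) auto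
  moreover have "Om Ws \<le> Min ?A" using Ws(1,3) finX by (subst Min_ge_iff) auto
  ultimately show ?thesis by simp
qed

end
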